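(* Let $r,n\ge2$, $\pi=A_1\cdots A_n\in\mathbb{S}_{2rn}$ with $A_j=(2r(j-1)+1\ \cdots\ 2rj)$, and $\mathcal{C}$ its conjugacy class. Let $t\in\mathcal{C}$ with $t\pi=\pi t$ and let $g\in\mathbb{S}_{2rn}$ with $g\pi g^{-1}=t$. Write $t=A_1^{d_1}\cdots A_n^{d_n}B$ and $g^{-1}\pi g=A_1^{e_1}\cdots A_n^{e_n}B'$ with $B,B'\in\langle B_1,\dots,B_{n-1}\rangle$. Then $\Phi(B)$ and $\Phi(B')$ have the same cycle type in $\mathbb{S}_n$.
   Context: Permutations are composed right to left. $B_i$ ($1\le i\le n-1$) is the involution exchanging $2r(i-1)+m\leftrightarrow 2ri+m$ for $1\le m\le 2r$. The centralizer of $\pi$ is $\mathbb{S}_{2rn}^\pi=\langle A_1,\dots,A_n\rangle\rtimes\langle B_1,\dots,B_{n-1}\rangle\cong\mathbb{Z}_{2r}^n\rtimes\mathbb{S}_n$, so every element of it is uniquely written $A_1^{d_1}\cdots A_n^{d_n}B$ with $0\le d_j\le 2r-1$ and $B\in\langle B_1,\dots,B_{n-1}\rangle$ (both $t$ and $g^{-1}\pi g$ lie in it). $\Phi:\langle B_1,\dots,B_{n-1}\rangle\to\mathbb{S}_n$ is the group isomorphism with $\Phi(B_i)=(i\ i+1)$. *)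

theory Defs
  imports "HOL-Combinatorics.Permutations" "HOL-Library.Multiset"
begin

text \<open>Permutations of {1..2rn} are functions nat => nat with 'permutes';
  composition is right to left: (f o g) x = f (g x).\<close>

definition Acyc :: "nat \<Rightarrow> nat \<Rightarrow> nat \<Rightarrow> nat" where
  "Acyc r j x = (if 2*r*(j-1) + 1 \<le> x \<and> x < 2*r*j then x + 1
                 else if x = 2*r*j then 2*r*(j-1) + 1 else x)"

definition piperm :: "nat \<Rightarrow> nat \<Rightarrow> nat \<Rightarrow> nat" where
  "piperm r n = foldr (\<lambda>j f. Acyc r j \<circ> f) [1..<n+1] id"

definition Aprod :: "nat \<Rightarrow> nat \<Rightarrow> (nat \<Rightarrow> nat) \<Rightarrow> nat \<Rightarrow> nat" where
  "Aprod r n d = foldr (\<lambda>j f. (Acyc r j ^^ d j) \<circ> f) [1..<n+1] id"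

definition Bgen :: "nat \<Rightarrow> nat \<Rightarrow> nat \<Rightarrow> nat" where
  "Bgen r i x = (if 2*r*(i-1) < x \<and> x \<le> 2*r*i then x + 2*r
                 else if 2*r*i < x \<and> x \<le> 2*r*(i+1) then x - 2*r else x)"

text \<open>The subgroup generated by B_1, ..., B_{n-1} (generators are involutions,
  so the generated monoid is the generated group).\<close>
inductive_set Bgroup :: "nat \<Rightarrow> nat \<Rightarrow> (nat \<Rightarrow> nat) set" for r n where
  Bgroup_id: "id \<in> Bgroup r n"
| Bgroup_step: "B \<in> Bgroup r n \<Longrightarrow> 1 \<le> i \<Longrightarrow> i < n \<Longrightarrow> Bgen r i \<circ> B \<in> Bgroup r n"

text \<open>Phi: the permutation of the blocks {1..n} induced by B (so Phi(B_i) = (i i+1)).\<close>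
definition Phi :: "nat \<Rightarrow> nat \<Rightarrow> (nat \<Rightarrow> nat) \<Rightarrow> nat \<Rightarrow> nat" where
  "Phi r n B j = (if 1 \<le> j \<and> j \<le> n then (B (2*r*(j-1) + 1) - 1) div (2*r) + 1 else j)"

definition cyc_orbit :: "(nat \<Rightarrow> nat) \<Rightarrow> nat \<Rightarrow> nat set" where
  "cyc_orbit \<sigma> x = {(\<sigma> ^^ k) x | k. True}"

definition cycle_type :: "(nat \<Rightarrow> nat) \<Rightarrow> nat \<Rightarrow> nat multiset" where
  "cycle_type \<sigma> n = image_mset card (mset_set (cyc_orbit \<sigma> ` {1..n}))"

end

theory Submission
  imports Defs
begin

lemma funpow_comm:
  assumes "f \<circ> g = g \<circ> f"
  shows "(f ^^ a) ((g ^^ b) x) = (g ^^ b) ((f ^^ a) x)"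
proof -
  have 1: "f ((g ^^ b) y) = (g ^^ b) (f y)" for y
  proof (induction b arbitrary: y)
    case 0 then show ?case by simp
  next
    case (Suc b)
    have "f (g ((g ^^ b) y)) = g (f ((g ^^ b) y))" using assms by (metis comp_apply)
    then show ?case using Suc by simp
  qed
  show ?thesis by (induction a arbitrary: x) (simp_all add: 1)
qed

lemma funpow_in:
  assumes "\<forall>x\<in>X. P x \<in> X" "x \<in> X" shows "(P ^^ a) x \<in> X"
  using assms by (induction a) auto

lemma side:
  fixes X :: "nat set" and P T p \<sigma> :: "nat \<Rightarrow> nat" and c n :: nat
  assumes fin: "finite X"
  and PX: "\<forall>x\<in>X. P x \<in> X" and TX: "\<forall>x\<in>X. T x \<in> X"
  and pX: "p ` X = {1..n}"
  and pP: "\<forall>x\<in>X. p (P x) = p x" and pT: "\<forall>x\<in>X. p (T x) = \<sigma> (p x)"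
  and pfib: "\<forall>y\<in>X. \<forall>z\<in>X. p y = p z \<longrightarrow> (\<exists>k. y = (P^^k) z)"
  and pcard: "\<forall>j\<in>{1..n}. card {x\<in>X. p x = j} = c"
  and cpos: "c > 0"
  shows "cycle_type \<sigma> n = image_mset (\<lambda>U. card U div c) (mset_set ((\<lambda>x. {(P^^a) ((T^^b) x) | a b. True}) ` X))"
proof -
  define Orb where "Orb x = {(P^^a) ((T^^b) x) | a b. True}" for x
  have pPk: "p ((P^^a) y) = p y" if "y \<in> X" for a y
    using that by (induction a) (auto simp: pP funpow_in[OF PX])
  have pTk: "p ((T^^b) y) = (\<sigma>^^b) (p y)" if "y \<in> X" for b y
    using that by (induction b) (auto simp: pT funpow_in[OF TX])
  have OX: "Orb x \<subseteq> X" if "x \<in> X" for x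
    using that by (auto simp: Orb_def intro!: funpow_in[OF PX] funpow_in[OF TX])
  have pO: "p ` Orb x = cyc_orbit \<sigma> (p x)" if "x \<in> X" for x
  proof
    show "p ` Orb x \<subseteq> cyc_orbit \<sigma> (p x)"
      using that by (auto simp: Orb_def cyc_orbit_def pPk pTk funpow_in[OF TX])
    show "cyc_orbit \<sigma> (p x) \<subseteq> p ` Orb x"
    proof
      fix y assume "y \<in> cyc_orbit \<sigma> (p x)"
      then obtain b where "y = (\<sigma>^^b) (p x)" by (auto simp: cyc_orbit_def)
      then have "y = p ((P^^0) ((T^^b) x))" using that by (simp add: pTk)
      moreover have "(P^^0) ((T^^b) x) \<in> Orb x" unfolding Orb_def by blast
      ultimately show "y \<in> p ` Orb x" by blast
    qed
  qed
  have Ofull: "Orb x = {y\<in>X. p y \<in> p ` Orb x}" if "x \<in> X" for x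
  proof
    show "Orb x \<subseteq> {y\<in>X. p y \<in> p ` Orb x}" using OX[OF that] by auto
    show "{y\<in>X. p y \<in> p ` Orb x} \<subseteq> Orb x"
    proof clarify
      fix y z assume y: "y \<in> X" and z: "z \<in> Orb x" and e: "p y = p z"
      then obtain a b where zz: "z = (P^^a) ((T^^b) x)" by (auto simp: Orb_def)
      have "z \<in> X" using z OX[OF that] by auto
      then obtain k where "y = (P^^k) z" using pfib y e by blast
      then have "y = (P^^(k+a)) ((T^^b) x)" using zz by (simp add: funpow_add)
      then show "y \<in> Orb x" unfolding Orb_def by blast
    qed
  qed
  have cardO: "card (Orb x) = c * card (p ` Orb x)" if "x \<in> X" for x
  proof -
    have sub: "p ` Orb x \<subseteq> {1..n}" using OX[OF that] pX by auto
    have "Orb x = (\<Union>j\<in>p ` Orb x. {y\<in>X. p y = j})" using Ofull[OF that] by blast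
    moreover have "card (\<Union>j\<in>p ` Orb x. {y\<in>X. p y = j}) = (\<Sum>j\<in>p ` Orb x. card {y\<in>X. p y = j})"
      by (rule card_UN_disjoint) (use fin OX[OF that] finite_subset in auto)
    ultimately have "card (Orb x) = (\<Sum>j\<in>p ` Orb x. card {y\<in>X. p y = j})" by simp
    also have "\<dots> = (\<Sum>j\<in>p ` Orb x. c)" using sub pcard by (intro sum.cong) auto
    finally show ?thesis by simp
  qed
  have inj: "inj_on (image p) (Orb ` X)"
  proof (rule inj_onI)
    fix A B assume "A \<in> Orb ` X" "B \<in> Orb ` X" "p ` A = p ` B"
    then obtain x y where "x \<in> X" "y \<in> X" "A = Orb x" "B = Orb y" by blast
    then show "A = B" using Ofull \<open>p ` A = p ` B\<close> by metis
  qed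
  have img: "cyc_orbit \<sigma> ` {1..n} = image p ` (Orb ` X)"
  proof -
    have "cyc_orbit \<sigma> ` {1..n} = (\<lambda>x. cyc_orbit \<sigma> (p x)) ` X" using pX by (metis image_image)
    also have "\<dots> = (\<lambda>x. p ` Orb x) ` X" using pO by (intro image_cong) auto
    finally show ?thesis by (simp add: image_image)
  qed
  have "cycle_type \<sigma> n = image_mset card (image_mset (image p) (mset_set (Orb ` X)))"
    unfolding cycle_type_def img image_mset_mset_set[OF inj] ..
  also have "\<dots> = image_mset (\<lambda>U. card U div c) (mset_set (Orb ` X))"
    unfolding multiset.map_comp
  proof (rule image_mset_cong)
    fix U assume "U \<in># mset_set (Orb ` X)"
    then obtain x where "x \<in> X" "U = Orb x" using fin by auto
    then show "(card \<circ> image p) U = card U div c" using cardO cpos by simp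
  qed
  finally show ?thesis unfolding Orb_def .
qed


definition blk :: "nat \<Rightarrow> nat \<Rightarrow> nat" where
  "blk r x = (x - 1) div (2*r) + 1"

lemma L1: "(w::nat) < m \<Longrightarrow> m*a < m*b+w+1 \<longleftrightarrow> a \<le> b"
proof
  assume "w < m" "m*a < m*b+w+1"
  show "a \<le> b"
  proof (rule ccontr)
    assume "\<not> a \<le> b" then have "b + 1 \<le> a" by simp
    then have "m*(b+1) \<le> m*a" by (rule mult_le_mono2)
    then show False using \<open>w < m\<close> \<open>m*a < m*b+w+1\<close> by (simp add: algebra_simps)
  qed
next
  assume "a \<le> b" then have "m*a \<le> m*b" by (rule mult_le_mono2)
  then show "m*a < m*b+w+1" by linarith
qed

lemma L2: "(w::nat) < m \<Longrightarrow> m*b+w+1 \<le> m*a \<longleftrightarrow> b < a"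
  using L1[of w m a b] by auto

lemma blk_rep: "r > 0 \<Longrightarrow> w < 2*r \<Longrightarrow> blk r (2*r*b+w+1) = b+1"
  by (simp add: blk_def)

lemma decomp: "(r::nat) > 0 \<Longrightarrow> (x::nat) \<ge> 1 \<Longrightarrow> x = 2*r*((x-1) div (2*r)) + (x-1) mod (2*r) + 1"
proof -
  assume "x \<ge> 1"
  have "(x-1) div (2*r) * (2*r) + (x-1) mod (2*r) = x-1" by (rule div_mult_mod_eq)
  then show ?thesis using \<open>x \<ge> 1\<close> by (simp add: mult.commute)
qed

lemma Acyc_rep:
  assumes "r > 0" "j \<ge> 1" "w < 2*r"
  shows "Acyc r j (2*r*b+w+1) = (if b = j-1 then 2*r*b + (w+1) mod (2*r) + 1 else 2*r*b+w+1)"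
proof -
  define m where "m = 2*r"
  have m: "w < m" "m > 0" using assms by (auto simp: m_def)
  have c1: "m*(j-1)+1 \<le> m*b+w+1 \<longleftrightarrow> j - 1 \<le> b" using L1[OF m(1), of "j-1" b] by linarith
  show ?thesis
  proof (cases "w+1 < m")
    case True
    have c2: "m*b+w+1 < m*j \<longleftrightarrow> b < j" using L2[OF True, of b j] by linarith
    have c3: "m*b+w+1 \<noteq> m*j" using L1[OF m(1), of j b] L2[OF True, of b j] by linarith
    show ?thesis using True c1 c2 c3 assms unfolding Acyc_def m_def[symmetric] by auto
  next
    case False
    then have oo: "w + 1 = m" using m by simp
    have c2: "\<not> (m*b+w+1 < m*j \<and> j - 1 \<le> b)"
    proof
      assume h: "m*b+w+1 < m*j \<and> j - 1 \<le> b"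
      then have "m*(b+1) < m*j" using oo by (simp add: algebra_simps)
      then have "b+1 < j" by (rule mult_less_cancel1[THEN iffD1, THEN conjunct2])
      then show False using h by linarith
    qed
    have c3: "m*b+w+1 = m*j \<longleftrightarrow> b = j - 1"
    proof -
      have "m*b+w+1 = m*(b+1)" using oo by (simp add: algebra_simps)
      moreover have "m*(b+1) = m*j \<longleftrightarrow> b+1 = j" using m(2) by (simp only: mult_cancel1) simp
      ultimately show ?thesis using assms(2) by linarith
    qed
    have mm: "(w+1) mod m = 0" using oo by simp
    have A: "Acyc r j (m*b+w+1) = (if m*b+w+1 = m*j then m*(j-1)+1 else m*b+w+1)"
      using c2 c1 unfolding Acyc_def m_def[symmetric] by auto
    show ?thesis unfolding m_def[symmetric] A mm using c3 by auto
  qed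
qed

lemma Acyc_0: "r > 0 \<Longrightarrow> j \<ge> 1 \<Longrightarrow> Acyc r j 0 = 0"
  by (simp add: Acyc_def)

definition BP :: "nat \<Rightarrow> (nat \<Rightarrow> nat) \<Rightarrow> bool" where
  "BP r f = (\<forall>x\<ge>1. f x \<ge> 1 \<and> blk r (f x) = blk r x)"

lemma BP_id: "BP r id" by (simp add: BP_def)
lemma BP_comp: "BP r f \<Longrightarrow> BP r g \<Longrightarrow> BP r (f \<circ> g)" by (simp add: BP_def)
lemma BP_pow: "BP r f \<Longrightarrow> BP r (f ^^ k)"
  by (induction k) (auto simp: BP_def)

lemma BP_Acyc: assumes "r > 0" "j \<ge> 1" shows "BP r (Acyc r j)"
  unfolding BP_def
proof (intro allI impI)
  fix x :: nat assume "x \<ge> 1"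
  define b w where "b = (x-1) div (2*r)" and "w = (x-1) mod (2*r)"
  have x: "x = 2*r*b+w+1" and w: "w < 2*r" proof -
    show "x = 2*r*b+w+1" unfolding b_def w_def by (rule decomp[OF assms(1) \<open>x\<ge>1\<close>])
    show "w < 2*r" unfolding w_def using assms by simp
  qed
  have o2: "(w+1) mod (2*r) < 2*r" using assms by simp
  show "Acyc r j x \<ge> 1 \<and> blk r (Acyc r j x) = blk r x"
    unfolding x Acyc_rep[OF assms w] using blk_rep[OF assms(1) w] blk_rep[OF assms(1) o2] by simp
qed

lemma BP_Aprod_list: "r > 0 \<Longrightarrow> \<forall>j\<in>set xs. j \<ge> 1 \<Longrightarrow> BP r (foldr (\<lambda>j f. (Acyc r j ^^ d j) \<circ> f) xs id)"
  by (induction xs) (auto intro!: BP_comp BP_pow BP_Acyc BP_id)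

lemma BP_Aprod: "r > 0 \<Longrightarrow> BP r (Aprod r n d)"
  unfolding Aprod_def by (rule BP_Aprod_list) auto

lemma foldr_comp: "foldr (\<lambda>j f. F j \<circ> f) xs h = foldr (\<lambda>j f. F j \<circ> f) xs id \<circ> h"
  by (induction xs) (auto simp: comp_assoc)

definition rot :: "nat \<Rightarrow> nat \<Rightarrow> nat" where
  "rot r x = 2*r*((x-1) div (2*r)) + ((x-1) mod (2*r) + 1) mod (2*r) + 1"

lemma piperm_formula:
  assumes "r > 0"
  shows "piperm r n x = (if 1 \<le> x \<and> x \<le> 2*r*n then rot r x else x)"
proof (induction n arbitrary: x)
  case 0
  then show ?case by (simp add: piperm_def)
next
  case (Suc n)
  have "[1..<Suc n+1] = [1..<n+1] @ [n+1]" by simp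
  then have e: "piperm r (Suc n) = piperm r n \<circ> Acyc r (n+1)"
    unfolding piperm_def by (simp add: foldr_comp[of _ _ "Acyc r (Suc n)"])
  show ?case
  proof (cases "x \<ge> 1")
    case False
    then have "x = 0" by simp
    then show ?thesis using e Suc[of 0] by (simp add: Acyc_0[OF assms])
  next
    case True
    define b w where "b = (x-1) div (2*r)" and "w = (x-1) mod (2*r)"
    have x: "x = 2*r*b+w+1" and w: "w < 2*r" proof -
      show "x = 2*r*b+w+1" unfolding b_def w_def by (rule decomp[OF assms True])
      show "w < 2*r" unfolding w_def using assms by simp
    qed
    have o2: "(w+1) mod (2*r) < 2*r" using assms by simp
    have rx: "rot r x = 2*r*b + (w+1) mod (2*r) + 1" unfolding rot_def x using assms w by simp
    have A: "Acyc r (n+1) x = (if b = n then rot r x else x)"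
      unfolding rx unfolding x using Acyc_rep[OF assms _ w, of "n+1" b] by simp
    have le1: "x \<le> 2*r*n \<longleftrightarrow> b < n" unfolding x using L2[OF w, of b n] by simp
    have le2: "x \<le> 2*r*Suc n \<longleftrightarrow> b < Suc n" unfolding x using L2[OF w, of b "Suc n"] by simp
    have le3: "rot r x \<le> 2*r*n \<longleftrightarrow> b < n" unfolding rx using L2[OF o2, of b n] by simp
    show ?thesis
    proof (cases "b = n")
      case True
      then show ?thesis using e A Suc[of "rot r x"] le2 le3 \<open>1 \<le> x\<close> by simp
    next
      case False
      then show ?thesis using e A Suc[of x] le1 le2 \<open>1 \<le> x\<close> by auto
    qed
  qed
qed

lemma piperm_rep:
  assumes "r > 0" "b < n" "w < 2*r"
  shows "piperm r n (2*r*b+w+1) = 2*r*b + (w+1) mod (2*r) + 1"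
proof -
  have "2*r*b+w+1 \<le> 2*r*n" using L2[OF assms(3), of b n] assms by simp
  then show ?thesis using assms by (simp add: piperm_formula rot_def)
qed

lemma piperm_pow:
  assumes "r > 0" "b < n" "w < 2*r"
  shows "(piperm r n ^^ k) (2*r*b+w+1) = 2*r*b + (w+k) mod (2*r) + 1"
proof (induction k)
  case 0 then show ?case using assms by simp
next
  case (Suc k)
  have "(w+k) mod (2*r) < 2*r" using assms by simp
  then show ?case using Suc piperm_rep[OF assms(1,2)] by (simp add: mod_Suc_eq)
qed


definition sw :: "nat \<Rightarrow> nat \<Rightarrow> nat" where
  "sw i c = (if c = i-1 then i else if c = i then i-1 else c)"

lemma Bgen_rep:
  assumes "r > 0" "i \<ge> 1" "w < 2*r"
  shows "Bgen r i (2*r*c+w+1) = 2*r*(sw i c)+w+1"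
proof -
  define m where "m = 2*r"
  have w: "w < m" using assms by (simp add: m_def)
  have a1: "m*(i-1) < m*c+w+1 \<longleftrightarrow> i-1 \<le> c" by (rule L1[OF w])
  have a2: "m*c+w+1 \<le> m*i \<longleftrightarrow> c < i" by (rule L2[OF w])
  have a3: "m*i < m*c+w+1 \<longleftrightarrow> i \<le> c" by (rule L1[OF w])
  have a4: "m*c+w+1 \<le> m*(i+1) \<longleftrightarrow> c < i+1" by (rule L2[OF w])
  have B: "Bgen r i (m*c+w+1) = (if c = i-1 then m*c+w+1+m else if c = i then m*c+w+1-m else m*c+w+1)"
  proof -
    have k1: "(m*(i-1) < m*c+w+1 \<and> m*c+w+1 \<le> m*i) \<longleftrightarrow> c = i-1" using a1 a2 assms(2) by linarith
    have k2: "(m*i < m*c+w+1 \<and> m*c+w+1 \<le> m*(i+1)) \<longleftrightarrow> c = i" using a3 a4 by linarith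
    show ?thesis unfolding Bgen_def m_def[symmetric] k1 k2 ..
  qed
  show ?thesis
  proof (cases "c = i-1")
    case True
    have ic: "i = c+1" using True assms(2) by simp
    have "m*i = m*c + m" unfolding ic by (simp add: algebra_simps)
    then have "m*c+w+1+m = m*i+w+1" by linarith
    then show ?thesis using True B unfolding m_def[symmetric] sw_def by simp
  next
    case False
    note F = False
    show ?thesis
    proof (cases "c = i")
      case True
      have ic: "c = (i-1)+1" using True assms(2) by simp
      have "m*c = m*(i-1) + m" by (subst ic) (simp add: algebra_simps)
      then have "m*c+w+1-m = m*(i-1)+w+1" by linarith
      then show ?thesis using True F B unfolding m_def[symmetric] sw_def by simp
    next
      case False
      then show ?thesis using F B unfolding m_def[symmetric] sw_def by simp
    qed
  qed
qed

lemma Bgroup_inv: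
  assumes "B \<in> Bgroup r n" "r > 0"
  shows "\<exists>\<tau>. (\<forall>b<n. \<tau> b < n) \<and> (\<forall>b<n. \<forall>w<2*r. B (2*r*b+w+1) = 2*r*\<tau> b + w + 1)"
  using assms(1)
proof induction
  case Bgroup_id
  show ?case by (rule exI[of _ id]) simp
next
  case (Bgroup_step B i)
  then obtain \<tau> where t1: "\<forall>b<n. \<tau> b < n" and t2: "\<forall>b<n. \<forall>w<2*r. B (2*r*b+w+1) = 2*r*\<tau> b + w + 1" by blast
  show ?case
  proof (rule exI[of _ "sw i \<circ> \<tau>"], intro conjI allI impI)
    fix b assume "b < n"
    then show "(sw i \<circ> \<tau>) b < n" using t1 Bgroup_step by (auto simp: sw_def)
  next
    fix b w assume "b < n" "w < 2*r"
    then show "(Bgen r i \<circ> B) (2*r*b+w+1) = 2*r*(sw i \<circ> \<tau>) b + w + 1"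
      using t2 Bgen_rep[OF assms(2) Bgroup_step(2)] by simp
  qed
qed

lemma Bgroup_blk:
  assumes "B \<in> Bgroup r n" "r > 0" "x \<in> {1..2*r*n}"
  shows "B x \<in> {1..2*r*n} \<and> blk r (B x) = Phi r n B (blk r x)"
proof -
  obtain \<tau> where t1: "\<forall>b<n. \<tau> b < n" and t2: "\<forall>b<n. \<forall>w<2*r. B (2*r*b+w+1) = 2*r*\<tau> b + w + 1"
    using Bgroup_inv[OF assms(1,2)] by blast
  define b w where "b = (x-1) div (2*r)" and "w = (x-1) mod (2*r)"
  have x: "x = 2*r*b+w+1" unfolding b_def w_def by (rule decomp) (use assms in auto)
  have w: "w < 2*r" unfolding w_def using assms by simp
  have b: "b < n" using x assms(3) L2[OF w, of b n] by simp
  have Bx: "B x = 2*r*\<tau> b + w + 1" using t2 b w x by simp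
  have B0: "B (2*r*b+0+1) = 2*r*\<tau> b + 0 + 1" using t2[rule_format, of b 0] b assms(2) by simp
  have bx: "blk r x = b + 1" using x blk_rep[OF assms(2) w] by simp
  have "Phi r n B (b+1) = \<tau> b + 1" using B0 b assms(2) unfolding Phi_def by simp
  moreover have "B x \<le> 2*r*n" using Bx L2[OF w, of "\<tau> b" n] t1 b by simp
  ultimately show ?thesis using Bx bx blk_rep[OF assms(2) w] by simp
qed


lemma X_rep:
  assumes "(r::nat) > 0" "(x::nat) \<in> {1..2*r*n}"
  obtains b w where "x = 2*r*b+w+1" "b < n" "w < 2*r"
proof -
  define b w where "b = (x-1) div (2*r)" and "w = (x-1) mod (2*r)"
  have x: "x = 2*r*b+w+1" unfolding b_def w_def by (rule decomp) (use assms in auto)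
  have w: "w < 2*r" unfolding w_def using assms by simp
  have b: "b < n" using x assms(2) L2[OF w, of b n] by simp
  show ?thesis using that x b w by blast
qed

lemma rep_in: "(b::nat) < n \<Longrightarrow> (w::nat) < 2*r \<Longrightarrow> 2*r*b+w+1 \<in> {1..2*r*n}"
  using L2[of w "2*r" b n] by simp

lemma pi_facts:
  assumes "r > 0" "x \<in> {1..2*r*n}"
  shows "piperm r n x \<in> {1..2*r*n} \<and> blk r (piperm r n x) = blk r x"
proof -
  obtain b w where x: "x = 2*r*b+w+1" "b < n" "w < 2*r" using X_rep[OF assms] by blast
  have w2: "(w+1) mod (2*r) < 2*r" using assms by simp
  show ?thesis unfolding x(1) piperm_rep[OF assms(1) x(2,3)]
    using rep_in[OF x(2) w2] blk_rep[OF assms(1) w2] blk_rep[OF assms(1) x(3)] by simp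
qed

lemma pi_fib:
  assumes "r > 0" "y \<in> {1..2*r*n}" "z \<in> {1..2*r*n}" "blk r y = blk r z"
  shows "\<exists>k. y = (piperm r n ^^ k) z"
proof -
  obtain b w where y: "y = 2*r*b+w+1" "b < n" "w < 2*r" using X_rep[OF assms(1,2)] by blast
  obtain b' w' where z: "z = 2*r*b'+w'+1" "b' < n" "w' < 2*r" using X_rep[OF assms(1,3)] by blast
  have "b = b'" using assms(4) blk_rep[OF assms(1) y(3)] blk_rep[OF assms(1) z(3)] y z by simp
  have "(piperm r n ^^ (w + 2*r - w')) z = 2*r*b + (w' + (w + 2*r - w')) mod (2*r) + 1"
    unfolding z(1) piperm_pow[OF assms(1) z(2,3)] \<open>b = b'\<close> ..
  moreover have "(w' + (w + 2*r - w')) mod (2*r) = w" using z(3) y(3) by simp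
  ultimately show ?thesis using y(1) by metis
qed

lemma blk_fiber:
  assumes "r > 0" "j \<in> {1..n}"
  shows "card {x\<in>{1..2*r*n}. blk r x = j} = 2*r"
proof -
  have "{x\<in>{1..2*r*n}. blk r x = j} = (\<lambda>w. 2*r*(j-1)+w+1) ` {..<2*r}"
  proof
    show "{x\<in>{1..2*r*n}. blk r x = j} \<subseteq> (\<lambda>w. 2*r*(j-1)+w+1) ` {..<2*r}"
    proof
      fix x assume "x \<in> {x\<in>{1..2*r*n}. blk r x = j}"
      then have x: "x \<in> {1..2*r*n}" "blk r x = j" by auto
      obtain b w where xx: "x = 2*r*b+w+1" "b < n" "w < 2*r" using X_rep[OF assms(1) x(1)] by blast
      have "b = j - 1" using x(2) blk_rep[OF assms(1) xx(3)] xx(1) by simp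
      then show "x \<in> (\<lambda>w. 2*r*(j-1)+w+1) ` {..<2*r}" using xx by auto
    qed
    show "(\<lambda>w. 2*r*(j-1)+w+1) ` {..<2*r} \<subseteq> {x\<in>{1..2*r*n}. blk r x = j}"
    proof
      fix x assume "x \<in> (\<lambda>w. 2*r*(j-1)+w+1) ` {..<2*r}"
      then obtain w where w: "w < 2*r" and xw: "x = 2*r*(j-1)+w+1" by auto
      have "j - 1 < n" using assms by auto
      then show "x \<in> {x\<in>{1..2*r*n}. blk r x = j}"
        using rep_in[OF _ w] blk_rep[OF assms(1) w] assms(2) xw by auto
    qed
  qed
  moreover have "inj_on (\<lambda>w. 2*r*(j-1)+w+1) {..<2*r}" by (rule inj_onI) simp
  ultimately show ?thesis by (simp add: card_image)
qed

lemma blk_image: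
  assumes "r > 0" shows "blk r ` {1..2*r*n} = {1..n}"
proof
  show "blk r ` {1..2*r*n} \<subseteq> {1..n}"
  proof clarify
    fix x assume x: "x \<in> {1..2*r*n}"
    obtain b w where xx: "x = 2*r*b+w+1" "b < n" "w < 2*r" using X_rep[OF assms x] by blast
    show "blk r x \<in> {1..n}" using xx blk_rep[OF assms xx(3)] by simp
  qed
  show "{1..n} \<subseteq> blk r ` {1..2*r*n}"
  proof
    fix j assume j: "j \<in> {1..n}"
    have w: "(0::nat) < 2*r" using assms by simp
    have "j - 1 < n" using j by auto
    then have "2*r*(j-1)+0+1 \<in> {1..2*r*n}" by (rule rep_in[OF _ w])
    moreover have "blk r (2*r*(j-1)+0+1) = j" using blk_rep[OF assms w] j by simp
    ultimately show "j \<in> blk r ` {1..2*r*n}" by (metis image_eqI)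
  qed
qed


theorem lemma2p17:
  fixes r n :: nat and t g B B' :: "nat \<Rightarrow> nat" and d e :: "nat \<Rightarrow> nat"
  assumes "r \<ge> 2" and "n \<ge> 2"
    and "g permutes {1..2*r*n}"
    and "t permutes {1..2*r*n}"
    and "t \<circ> piperm r n = piperm r n \<circ> t"
    and "g \<circ> piperm r n \<circ> inv g = t"
    and "B \<in> Bgroup r n" and "B' \<in> Bgroup r n"
    and "\<forall>j. d j < 2*r" and "\<forall>j. e j < 2*r"
    and "t = Aprod r n d \<circ> B"
    and "inv g \<circ> piperm r n \<circ> g = Aprod r n e \<circ> B'"
  shows "cycle_type (Phi r n B) n = cycle_type (Phi r n B') n"
proof -
  define X where "X = {1..2*r*n}"
  define P where "P = piperm r n"
  define q where "q = (\<lambda>x. blk r (inv g x))"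
  have r: "r > 0" using assms(1) by simp
  have fin: "finite X" by (simp add: X_def)
  have ig: "inv g permutes X" using permutes_inv[OF assms(3)] by (simp add: X_def)
  have gig: "g (inv g x) = x" for x using permutes_inverses(1)[OF assms(3)] by simp
  have igg: "inv g (g x) = x" for x using permutes_inverses(2)[OF assms(3)] by simp
  have igX: "inv g x \<in> X" if "x \<in> X" for x using permutes_in_image[OF ig] that by simp
  have gX: "g x \<in> X" if "x \<in> X" for x using permutes_in_image[OF assms(3)] that by (simp add: X_def)
  have PX: "\<forall>x\<in>X. P x \<in> X" and pP: "\<forall>x\<in>X. blk r (P x) = blk r x"
    using pi_facts[OF r] by (auto simp: X_def P_def)
  have TX: "\<forall>x\<in>X. t x \<in> X" using permutes_in_image[OF assms(4)] by (simp add: X_def)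
  have comm: "t \<circ> P = P \<circ> t" using assms(5) by (simp add: P_def)
  have tdef: "t x = g (P (inv g x))" for x using assms(6) by (auto simp: P_def)
  have sdef: "inv g (P (g x)) = Aprod r n e (B' x)" for x using fun_cong[OF assms(12), of x] by (simp add: P_def)
  have pX: "blk r ` X = {1..n}" using blk_image[OF r] by (simp add: X_def)
  have qX: "q ` X = {1..n}"
  proof -
    have "inv g ` X = X" using permutes_image[OF ig] .
    then have "q ` X = blk r ` X" unfolding q_def by (metis image_image)
    then show ?thesis using pX by simp
  qed
  have pT: "\<forall>x\<in>X. blk r (t x) = Phi r n B (blk r x)"
  proof
    fix x assume x: "x \<in> X"
    have Bx: "B x \<in> {1..2*r*n} \<and> blk r (B x) = Phi r n B (blk r x)"
      using Bgroup_blk[OF assms(7) r] x by (simp add: X_def)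
    have "blk r (Aprod r n d (B x)) = blk r (B x)" using BP_Aprod[OF r] Bx unfolding BP_def by simp
    then show "blk r (t x) = Phi r n B (blk r x)" using assms(11) Bx by simp
  qed
  have qT: "\<forall>x\<in>X. q (t x) = q x"
    using pP igX by (simp add: q_def tdef igg)
  have qP: "\<forall>x\<in>X. q (P x) = Phi r n B' (q x)"
  proof
    fix x assume x: "x \<in> X"
    have "inv g (P x) = Aprod r n e (B' (inv g x))" using sdef[of "inv g x"] by (simp add: gig)
    moreover have Bx: "B' (inv g x) \<in> {1..2*r*n} \<and> blk r (B' (inv g x)) = Phi r n B' (blk r (inv g x))"
      using Bgroup_blk[OF assms(8) r] igX[OF x] by (simp add: X_def)
    moreover have "blk r (Aprod r n e (B' (inv g x))) = blk r (B' (inv g x))"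
      using BP_Aprod[OF r] Bx unfolding BP_def by simp
    ultimately show "q (P x) = Phi r n B' (q x)" by (simp add: q_def)
  qed
  have pfib: "\<forall>y\<in>X. \<forall>z\<in>X. blk r y = blk r z \<longrightarrow> (\<exists>k. y = (P^^k) z)"
    using pi_fib[OF r] by (auto simp: X_def P_def)
  have tpow: "(t ^^ k) x = g ((P ^^ k) (inv g x))" for k x
    by (induction k) (simp_all add: gig igg tdef)
  have qfib: "\<forall>y\<in>X. \<forall>z\<in>X. q y = q z \<longrightarrow> (\<exists>k. y = (t^^k) z)"
  proof (intro ballI impI)
    fix y z assume y: "y \<in> X" and z: "z \<in> X" and e: "q y = q z"
    have "blk r (inv g y) = blk r (inv g z)" using e by (simp add: q_def)
    then obtain k where "inv g y = (P^^k) (inv g z)" using pfib igX[OF y] igX[OF z] by blast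
    then have "y = (t^^k) z" using tpow gig by metis
    then show "\<exists>k. y = (t^^k) z" by blast
  qed
  have pcard: "\<forall>j\<in>{1..n}. card {x\<in>X. blk r x = j} = 2*r"
    using blk_fiber[OF r] by (simp add: X_def)
  have qcard: "\<forall>j\<in>{1..n}. card {x\<in>X. q x = j} = 2*r"
  proof
    fix j assume j: "j \<in> {1..n}"
    have "{x\<in>X. q x = j} = g ` {x\<in>X. blk r x = j}"
    proof
      show "{x\<in>X. q x = j} \<subseteq> g ` {x\<in>X. blk r x = j}"
      proof
        fix x assume "x \<in> {x\<in>X. q x = j}"
        then have "inv g x \<in> {x\<in>X. blk r x = j}" using igX by (auto simp: q_def)
        then show "x \<in> g ` {x\<in>X. blk r x = j}" using gig by (metis image_eqI)
      qed
      show "g ` {x\<in>X. blk r x = j} \<subseteq> {x\<in>X. q x = j}"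
        using gX by (auto simp: q_def igg)
    qed
    moreover have "inj g" using permutes_inj[OF assms(3)] .
    ultimately show "card {x\<in>X. q x = j} = 2*r" using pcard j
      by (simp add: card_image inj_on_subset)
  qed
  have c: "2*r > 0" using r by simp
  have s1: "cycle_type (Phi r n B) n = image_mset (\<lambda>U. card U div (2*r)) (mset_set ((\<lambda>x. {(P^^a) ((t^^b) x) | a b. True}) ` X))"
    by (rule side[OF fin PX TX pX pP pT pfib pcard c])
  have s2: "cycle_type (Phi r n B') n = image_mset (\<lambda>U. card U div (2*r)) (mset_set ((\<lambda>x. {(t^^a) ((P^^b) x) | a b. True}) ` X))"
    by (rule side[OF fin TX PX qX qT qP qfib qcard c])
  have EQ: "(\<lambda>x. {(t^^a) ((P^^b) x) | a b. True}) = (\<lambda>x. {(P^^a) ((t^^b) x) | a b. True})"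
  proof (rule ext)
    fix x
    have "(t^^a) ((P^^b) x) = (P^^b) ((t^^a) x)" for a b by (rule funpow_comm[OF comm])
    then have "{(t^^a) ((P^^b) x) | a b. True} = {(P^^b) ((t^^a) x) | a b. True}" by simp
    also have "\<dots> = {(P^^a) ((t^^b) x) | a b. True}" by blast
    finally show "{(t^^a) ((P^^b) x) | a b. True} = {(P^^a) ((t^^b) x) | a b. True}" .
  qed
  show ?thesis unfolding s1 s2 EQ ..
qed

end
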